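(* Let $\lambda$ be a partition with exactly two parts. Then $C_\lambda(q,t)=C_\lambda(t,q)$.
   Context: For a vector $\vec{k}=(k_1,\dots,k_n)$ of positive integers, $\lambda(\vec{k})$ denotes the partition obtained by sorting its entries decreasingly, and $|\vec{k}|=\sum k_i$. A $\vec{k}$-Dyck path is a word $D=\sigma_1\cdots\sigma_N$, $N=|\vec{k}|+n$, with $n$ red arrows and $|\vec{k}|$ blue arrows $W$, the $j$-th red arrow from the left being $S^{k_j}$ of value $k_j$, each $W$ of value $-1$; ranks $r_1=0$, $r_{m+1}=r_m+(\text{value of }\sigma_m)$ must all be $\ge0$. Starting rank $r(\sigma_m)=r_m$, end rank $\dot r(\sigma_m)=r_{m+1}$; $A<B$ means $A$ is left of $B$. $\mathcal{D}_{\vec{k}}$ is the set of $\vec{k}$-Dyck paths. $\operatorname{area}(D)=\sum_S r(S)$ over red arrows $S$. $\operatorname{dinv}(D)$ = (number of pairs (blue $W$, red $S$) with $W<S$ and $W$ sweeping $S$, i.e. $W$ meets $S$ when moved right past $S$ along a line of slope $0<\epsilon\ll1$, equivalently $r(S)\le r(W)\le\dot r(S)$) $+\sum_{S_i<S_j}\chi(r(S_i)\ge r(S_j)\ \&\ \dot r(S_j)>\dot r(S_i))(\dot r(S_j)-\dot r(S_i))+\sum_{S_i<S_j}\chi(r(S_i)<r(S_j)\ \&\ \dot r(S_j)<\dot r(S_i))(\dot r(S_i)-\dot r(S_j))$ over pairs of red arrows. For a partition $\lambda$, $C_\lambda(q,t)=\sum_{\vec{k}:\ \lambda(\vec{k})=\lambda}\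 \sum_{D\in\mathcal{D}_{\vec{k}}} q^{\operatorname{dinv}(D)}t^{\operatorname{area}(D)}$, the outer sum over all vectors $\vec{k}$ whose entries rearrange to $\lambda$. *)

theory Defs
  imports Main
begin

text \<open>A step of a path: a red arrow S^k (value k) or a blue arrow W (value -1).\<close>
datatype step = Red nat | Blue

fun step_val :: "step \<Rightarrow> int" where
  "step_val (Red k) = int k"
| "step_val Blue = -1"

fun is_red :: "step \<Rightarrow> bool" where
  "is_red (Red k) = True"
| "is_red Blue = False"

fun red_val :: "step \<Rightarrow> nat" where
  "red_val (Red k) = k"
| "red_val Blue = 0"

text \<open>Rank r_{m+1} (0-indexed: rank D m is the starting rank of step D!m;
  rank D (m+1) is its end rank).\<close>
definition rank :: "step list \<Rightarrow> nat \<Rightarrow> int" where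
  "rank D m = (\<Sum>i<m. step_val (D ! i))"

definition dyck_paths :: "nat list \<Rightarrow> step list set" where
  "dyck_paths k = {D. map red_val (filter is_red D) = k
                     \<and> length (filter (\<lambda>s. s = Blue) D) = sum_list k
                     \<and> (\<forall>m\<le>length D. rank D m \<ge> 0)}"

definition area :: "step list \<Rightarrow> int" where
  "area D = (\<Sum>m | m < length D \<and> is_red (D ! m). rank D m)"

definition dinv :: "step list \<Rightarrow> int" where
  "dinv D =
     int (card {(a, b). a < b \<and> b < length D \<and> D ! a = Blue \<and> is_red (D ! b)
                  \<and> rank D b \<le> rank D a \<and> rank D a \<le> rank D (Suc b)})
   + (\<Sum>(i, j) | i < j \<and> j < length D \<and> is_red (D ! i) \<and> is_red (D ! j).
        (if rank D i \<ge> rank D j \<and> rank D (Suc j) > rank D (Suc i)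
         then rank D (Suc j) - rank D (Suc i) else 0)
      + (if rank D i < rank D j \<and> rank D (Suc j) < rank D (Suc i)
         then rank D (Suc i) - rank D (Suc j) else 0))"

definition is_partition :: "nat list \<Rightarrow> bool" where
  "is_partition lam \<longleftrightarrow> sorted_wrt (\<ge>) lam \<and> (\<forall>x\<in>set lam. 0 < x)"

definition part_of :: "nat list \<Rightarrow> nat list" where
  "part_of k = rev (sort k)"

definition C_poly :: "nat list \<Rightarrow> 'a::comm_semiring_1 \<Rightarrow> 'a \<Rightarrow> 'a" where
  "C_poly lam q t =
     (\<Sum>k\<in>{k. part_of k = lam}. \<Sum>D\<in>dyck_paths k. q ^ nat (dinv D) * t ^ nat (area D))"

end

theory Submission
  imports Defs
begin

definition P :: "nat \<Rightarrow> nat \<Rightarrow> nat \<Rightarrow> step list" where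
  "P k1 k2 i = Red k1 # replicate i Blue @ Red k2 # replicate (k1 + k2 - i) Blue"

lemma len_P: "i \<le> k1 + k2 \<Longrightarrow> length (P k1 k2 i) = k1 + k2 + 2"
  by (simp add: P_def)

lemma nth_P: "m < length (P k1 k2 i) \<Longrightarrow>
  P k1 k2 i ! m = (if m = 0 then Red k1 else if m = Suc i then Red k2 else Blue)"
  by (auto simp: P_def nth_append nth_Cons split: nat.split)

lemma rank_0: "rank D 0 = 0" by (simp add: rank_def)

lemma rank_Suc: "rank D (Suc m) = rank D m + step_val (D ! m)"
  by (simp add: rank_def)

lemma rank_P:
  assumes "i \<le> k1 + k2"
  shows "m \<le> k1 + k2 + 2 \<Longrightarrow> rank (P k1 k2 i) m =
    (if m = 0 then 0 else if m \<le> i + 1 then int k1 - (int m - 1)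
     else int k1 - int i + int k2 - (int m - int i - 2))"
proof (induction m)
  case 0
  then show ?case by (simp add: rank_0)
next
  case (Suc m)
  have lt: "m < length (P k1 k2 i)" using Suc.prems assms len_P by simp
  have IH: "rank (P k1 k2 i) m = (if m = 0 then 0 else if m \<le> i + 1 then int k1 - (int m - 1)
     else int k1 - int i + int k2 - (int m - int i - 2))" using Suc by simp
  show ?case unfolding rank_Suc IH nth_P[OF lt] by auto
qed

lemma nonred: "\<forall>u\<in>set us. \<not> is_red u \<Longrightarrow> us = replicate (length us) Blue"
proof (induction us)
  case (Cons a us)
  then show ?case by (cases a) auto
qed simp

lemma P_in: "i \<le> k1 \<Longrightarrow> P k1 k2 i \<in> dyck_paths [k1, k2]"
proof -
  assume i: "i \<le> k1"
  have "rank (P k1 k2 i) m \<ge> 0" if "m \<le> length (P k1 k2 i)" for m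
    using that i rank_P[of i k1 k2 m] len_P[of i k1 k2] by auto
  then show ?thesis using i by (simp add: dyck_paths_def P_def filter_replicate)
qed

lemma in_P:
  assumes D: "D \<in> dyck_paths [k1, k2]"
  shows "\<exists>i\<le>k1. D = P k1 k2 i"
proof -
  from D have f: "map red_val (filter is_red D) = [k1, k2]"
    and bl: "length (filter (\<lambda>s. s = Blue) D) = k1 + k2"
    and rk: "\<forall>m\<le>length D. rank D m \<ge> 0" by (auto simp: dyck_paths_def)
  from f obtain s1 s2 where fs: "filter is_red D = [s1, s2]" "red_val s1 = k1" "red_val s2 = k2"
    by auto
  from filter_eq_ConsD[OF fs(1)] obtain us vs where
    u: "D = us @ s1 # vs" "\<forall>u\<in>set us. \<not> is_red u" "is_red s1" "[s2] = filter is_red vs" by blast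
  from filter_eq_ConsD[OF u(4)[symmetric]] obtain us2 ws where
    w: "vs = us2 @ s2 # ws" "\<forall>u\<in>set us2. \<not> is_red u" "is_red s2" "[] = filter is_red ws" by blast
  have s1: "s1 = Red k1" using u(3) fs(2) by (cases s1) auto
  have s2: "s2 = Red k2" using w(3) fs(3) by (cases s2) auto
  have ws: "\<forall>u\<in>set ws. \<not> is_red u" using w(4) by (metis filter_empty_conv)
  define n0 where "n0 = length us"
  define n1 where "n1 = length us2"
  define n2 where "n2 = length ws"
  have DD: "D = replicate n0 Blue @ Red k1 # replicate n1 Blue @ Red k2 # replicate n2 Blue"
    using u(1) w(1) s1 s2 nonred[OF u(2)] nonred[OF w(2)] nonred[OF ws] n0_def n1_def n2_def
    by simp
  have n0: "n0 = 0"
  proof (rule ccontr)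
    assume "n0 \<noteq> 0"
    then have "D ! 0 = Blue" using DD by (simp add: nth_append)
    then have "rank D 1 = -1" by (simp add: rank_def)
    moreover have "1 \<le> length D" using DD by simp
    ultimately show False using rk by fastforce
  qed
  have sum: "n0 + n1 + n2 = k1 + k2" using bl DD by (simp add: filter_replicate)
  have DP: "D = P k1 k2 n1" using DD n0 sum by (simp add: P_def)
  have n1le: "n1 \<le> k1 + k2" using sum by simp
  have "rank D (n1 + 1) \<ge> 0" using rk DD by simp
  then have "n1 \<le> k1" using rank_P[OF n1le, of "n1+1"] DP n1le by simp
  then show ?thesis using DP by blast
qed

lemma dyck2: "dyck_paths [k1, k2] = P k1 k2 ` {..k1}"
  using P_in in_P by fastforce

lemma inj_P: "inj_on (P k1 k2) {..k1}"
proof (rule inj_onI)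
  fix x y assume "P k1 k2 x = P k1 k2 y"
  then have "length (takeWhile (\<lambda>s. s = Blue) (tl (P k1 k2 x)))
           = length (takeWhile (\<lambda>s. s = Blue) (tl (P k1 k2 y)))" by simp
  then show "x = y" by (simp add: P_def takeWhile_append)
qed

lemma area_P:
  assumes i: "i \<le> k1"
  shows "area (P k1 k2 i) = int k1 - int i"
proof -
  have L: "length (P k1 k2 i) = k1 + k2 + 2" using i len_P by simp
  have S: "{m. m < length (P k1 k2 i) \<and> is_red (P k1 k2 i ! m)} = {0, Suc i}"
    using L i nth_P[of _ k1 k2 i] by (auto split: if_splits)
  show ?thesis unfolding area_def S using rank_P[of i k1 k2] i by (simp add: rank_0)
qed

lemma dinv_P:
  assumes i: "i \<le> k1" and k2: "0 < k2"
  shows "dinv (P k1 k2 i) = (if i < k1 then int i else int k2)"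
proof -
  let ?D = "P k1 k2 i"
  have L: "length ?D = k1 + k2 + 2" using i len_P by simp
  have ik: "i \<le> k1 + k2" using i by simp
  have R: "\<And>m. m \<le> k1 + k2 + 2 \<Longrightarrow> rank ?D m =
    (if m = 0 then 0 else if m \<le> i + 1 then int k1 - (int m - 1)
     else int k1 - int i + int k2 - (int m - int i - 2))" using rank_P[OF ik] by blast
  have N: "\<And>m. m < k1 + k2 + 2 \<Longrightarrow> ?D ! m =
     (if m = 0 then Red k1 else if m = Suc i then Red k2 else Blue)" using nth_P L by simp
  define l where "l = max 1 (i + 1 - k2)"
  have A: "{(a, b). a < b \<and> b < length ?D \<and> ?D ! a = Blue \<and> is_red (?D ! b)
                  \<and> rank ?D b \<le> rank ?D a \<and> rank ?D a \<le> rank ?D (Suc b)}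
         = (\<lambda>a. (a, Suc i)) ` {l..i}"
  proof (rule set_eqI, rule iffI)
    fix x assume "x \<in> {(a, b). a < b \<and> b < length ?D \<and> ?D ! a = Blue \<and> is_red (?D ! b)
                  \<and> rank ?D b \<le> rank ?D a \<and> rank ?D a \<le> rank ?D (Suc b)}"
    then obtain a b where x: "x = (a, b)" and h: "a < b" "b < k1 + k2 + 2" "?D ! a = Blue"
      "is_red (?D ! b)" "rank ?D b \<le> rank ?D a" "rank ?D a \<le> rank ?D (Suc b)"
      using L by auto
    have b: "b = Suc i" using h(1,2,4) N[of b] by (auto split: if_splits)
    have a: "a \<noteq> 0" "a \<le> i" using h(1,2,3) N[of a] b by (auto split: if_splits)
    have "rank ?D a \<le> rank ?D (Suc b)" by fact
    then have "int k1 - (int a - 1) \<le> int k1 - int i + int k2"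
      using R[of a] R[of "Suc b"] a b h(2) by (simp split: if_splits)
    then show "x \<in> (\<lambda>a. (a, Suc i)) ` {l..i}" using x a b l_def by auto
  next
    fix x assume "x \<in> (\<lambda>a. (a, Suc i)) ` {l..i}"
    then obtain a where x: "x = (a, Suc i)" and a: "l \<le> a" "a \<le> i" by auto
    have a1: "1 \<le> a" "i + 1 \<le> a + k2" using a l_def by auto
    have "?D ! a = Blue" using N[of a] a1 a i by auto
    moreover have "is_red (?D ! Suc i)" using N[of "Suc i"] i by auto
    moreover have "rank ?D (Suc i) \<le> rank ?D a" "rank ?D a \<le> rank ?D (Suc (Suc i))"
      using R[of a] R[of "Suc i"] R[of "Suc (Suc i)"] a a1 i by auto
    ultimately show "x \<in> {(a, b). a < b \<and> b < length ?D \<and> ?D ! a = Blue \<and> is_red (?D ! b)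
                  \<and> rank ?D b \<le> rank ?D a \<and> rank ?D a \<le> rank ?D (Suc b)}"
      using x a L i by auto
  qed
  have cA: "card ((\<lambda>a. (a, Suc i)) ` {l..i}) = min i k2"
    by (subst card_image) (auto simp: inj_on_def l_def)
  have B: "{(i', j). i' < j \<and> j < length ?D \<and> is_red (?D ! i') \<and> is_red (?D ! j)} = {(0, Suc i)}"
  proof (rule set_eqI, rule iffI)
    fix x assume "x \<in> {(i', j). i' < j \<and> j < length ?D \<and> is_red (?D ! i') \<and> is_red (?D ! j)}"
    then obtain a b where x: "x = (a, b)" and h: "a < b" "b < k1 + k2 + 2"
      "is_red (?D ! a)" "is_red (?D ! b)" using L by auto
    have b: "b = Suc i" using h(1,2,4) N[of b] by (auto split: if_splits)
    have "a = 0" using h(1,2,3) N[of a] b by (auto split: if_splits)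
    then show "x \<in> {(0, Suc i)}" using x b by simp
  next
    fix x assume "x \<in> {(0::nat, Suc i)}"
    then show "x \<in> {(i', j). i' < j \<and> j < length ?D \<and> is_red (?D ! i') \<and> is_red (?D ! j)}"
      using N[of 0] N[of "Suc i"] L i by auto
  qed
  have r0: "rank ?D 0 = 0" "rank ?D 1 = int k1" "rank ?D (Suc i) = int k1 - int i"
    "rank ?D (Suc (Suc i)) = int k1 - int i + int k2"
    using R[of 0] R[of 1] R[of "Suc i"] R[of "Suc (Suc i)"] i by auto
  show ?thesis unfolding dinv_def A B cA using r0 i k2 by auto
qed

definition S2 :: "nat \<Rightarrow> nat \<Rightarrow> 'a::comm_semiring_1 \<Rightarrow> 'a \<Rightarrow> 'a" where
  "S2 k1 k2 q t = (\<Sum>i<k1. q ^ i * t ^ (k1 - i)) + q ^ k2"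

lemma G2:
  fixes q t :: "'a::comm_semiring_1"
  assumes "0 < k1" "0 < k2"
  shows "(\<Sum>D\<in>dyck_paths [k1, k2]. q ^ nat (dinv D) * t ^ nat (area D)) = S2 k1 k2 q t"
proof -
  have "(\<Sum>D\<in>dyck_paths [k1, k2]. q ^ nat (dinv D) * t ^ nat (area D))
      = (\<Sum>i\<le>k1. q ^ nat (dinv (P k1 k2 i)) * t ^ nat (area (P k1 k2 i)))"
    unfolding dyck2 by (simp add: sum.reindex[OF inj_P])
  also have "\<dots> = (\<Sum>i\<le>k1. if i < k1 then q ^ i * t ^ (k1 - i) else q ^ k2)"
    by (rule sum.cong) (auto simp: dinv_P area_P assms nat_diff_distrib)
  also have "\<dots> = S2 k1 k2 q t"
    unfolding S2_def lessThan_Suc_atMost[symmetric] sum.lessThan_Suc by simp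
  finally show ?thesis .
qed

definition F :: "nat \<Rightarrow> 'a::comm_semiring_1 \<Rightarrow> 'a \<Rightarrow> 'a" where
  "F k q t = (\<Sum>i\<le>k. q ^ i * t ^ (k - i))"

lemma F_sym: "F k q t = F k t q"
proof -
  have "F k q t = (\<Sum>i=0..k. q ^ i * t ^ (k - i))" by (simp add: F_def atLeast0AtMost)
  also have "\<dots> = (\<Sum>i=0..k. q ^ (k - i) * t ^ (k - (k - i)))"
    by (subst sum.atLeastAtMost_rev) simp
  also have "\<dots> = F k t q" by (auto simp: F_def atLeast0AtMost mult.commute intro!: sum.cong)
  finally show ?thesis .
qed

lemma F_S: "F k q t = (\<Sum>i<k. q ^ i * t ^ (k - i)) + q ^ k"
  unfolding F_def lessThan_Suc_atMost[symmetric] sum.lessThan_Suc by simp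

lemma part2:
  assumes "b \<le> a"
  shows "{k. part_of k = [a, b]} = {[a, b], [b, a]}"
proof (rule set_eqI, rule iffI)
  fix k assume "k \<in> {k. part_of k = [a, b]}"
  then have h: "rev (sort k) = [a, b]" by (simp add: part_of_def)
  then have "length k = 2" by (metis length_rev length_sort length_Cons list.size(3) numeral_2_eq_2)
  then obtain x y where "k = [x, y]"
    by (metis (no_types, lifting) One_nat_def Suc_1 length_0_conv length_Suc_conv)
  then show "k \<in> {[a, b], [b, a]}" using h by (auto split: if_splits)
next
  fix k assume "k \<in> {[a, b], [b, a]}"
  then show "k \<in> {k. part_of k = [a, b]}" using assms by (auto simp: part_of_def)
qed

theorem mainTheorem3:
  fixes lam :: "nat list" and q t :: "'a::comm_semiring_1"
  assumes "is_partition lam" and "length lam = 2"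
  shows "C_poly lam q t = C_poly lam t q"
proof -
  obtain a b where lam: "lam = [a, b]" using assms(2)
    by (metis (no_types, lifting) One_nat_def Suc_1 length_0_conv length_Suc_conv)
  have ab: "b \<le> a" "0 < a" "0 < b" using assms(1) lam by (auto simp: is_partition_def)
  have C: "C_poly lam q t = (if a = b then F a q t else F a q t + F b q t)" for q t :: 'a
  proof (cases "a = b")
    case True
    then show ?thesis unfolding C_poly_def lam part2[OF ab(1)]
      by (simp add: G2[OF ab(3,3)] S2_def F_S)
  next
    case False
    then show ?thesis unfolding C_poly_def lam part2[OF ab(1)]
      by (simp add: G2[OF ab(2,3)] G2[OF ab(3,2)] S2_def F_S ac_simps)
  qed
  show ?thesis unfolding C using F_sym by metis
qed

end
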